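(* For every integer $k\ge1$, \[ \sum_{n=1}^\infty\frac{Q_{k+1}(H_n,H_n^{(2)},\dots,H_n^{(k+1)})}{(n+1)^2}+\sum_{n=1}^\infty\frac{Q_k(H_n,H_n^{(2)},\dots,H_n^{(k)})}{n^3}=(k+2)\zeta(k+3). \]
   Context: $H_n^{(r)}=\sum_{t=1}^n t^{-r}$, $H_n=H_n^{(1)}$. For $n\ge1$, $Q_n(y_1,\dots,y_n)=\sum_{m_1+2m_2+\cdots=n}\frac{1}{m_1!m_2!\cdots}\prod_{i\ge1}(y_i/i)^{m_i}$ (sum over tuples of nonnegative integers), i.e. $Q_n(p_1,\dots,p_n)=h_n$, the complete symmetric function. $\zeta$ is the Riemann zeta function. *)

theory Defs
  imports Complex_Main
begin

definition harm :: "nat \<Rightarrow> nat \<Rightarrow> real" where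
  "harm r n = (\<Sum>t=1..n. 1 / (real t) ^ r)"

definition Qidx :: "nat \<Rightarrow> (nat \<Rightarrow> nat) set" where
  "Qidx n = {m. (\<forall>i. m i \<noteq> 0 \<longrightarrow> i \<in> {1..n}) \<and> (\<Sum>i=1..n. i * m i) = n}"

definition Q :: "nat \<Rightarrow> (nat \<Rightarrow> real) \<Rightarrow> real" where
  "Q n y = (\<Sum>m\<in>Qidx n. \<Prod>i=1..n. (y i / real i) ^ (m i) / fact (m i))"

definition zeta_real :: "nat \<Rightarrow> real" where
  "zeta_real s = (\<Sum>n. 1 / (real (Suc n)) ^ s)"

end

theory Submission
  imports Defs
begin


lemma Qidx_finite: "finite (Qidx n)"
proof -
  have "Qidx n \<subseteq> {f. \<forall>x. (x \<in> {1..n} \<longrightarrow> f x \<in> {0..n}) \<and> (x \<notin> {1..n} \<longrightarrow> f x = 0)}"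
  proof safe
    fix m x assume m: "m \<in> Qidx n" and x: "x \<in> {1..n}"
    have "x * m x \<le> (\<Sum>i=1..n. i * m i)"
      by (rule member_le_sum) (use x in auto)
    also have "\<dots> = n" using m by (simp add: Qidx_def)
    finally have "x * m x \<le> n" .
    moreover have "m x \<le> x * m x" using x by simp
    ultimately have "m x \<le> n" by linarith
    thus "m x \<in> {0..n}" by simp
  next
    fix m x assume "m \<in> Qidx n" "x \<notin> {1..n}" thus "m x = 0" by (auto simp: Qidx_def)
  qed
  thus ?thesis by (rule finite_subset) (rule finite_set_of_finite_funs, auto)
qed

lemma Q0: "Q 0 y = 1"
proof -
  have "Qidx 0 = {\<lambda>_. 0}" by (auto simp: Qidx_def)
  thus ?thesis by (simp add: Q_def)
qed

definition TT :: "nat \<Rightarrow> (nat \<Rightarrow> nat) \<Rightarrow> (nat \<Rightarrow> real) \<Rightarrow> real" where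
  "TT K m y = (\<Prod>i=1..K. (y i / real i) ^ (m i) / fact (m i))"

lemma TT_extend: "(\<forall>i>K0. m i = 0) \<Longrightarrow> K0 \<le> K \<Longrightarrow> TT K m y = TT K0 m y"
  unfolding TT_def by (rule prod.mono_neutral_right) auto

lemma wsum_extend: "(\<forall>i>K0. (m::nat\<Rightarrow>nat) i = 0) \<Longrightarrow> K0 \<le> K \<Longrightarrow> (\<Sum>i=1..K. i * m i) = (\<Sum>i=1..K0. i * m i)"
  by (rule sum.mono_neutral_right) auto

lemma wupd: "(i::nat) \<in> {1..K} \<Longrightarrow> (\<Sum>l=1..K. l * (m(i:=v)) l) + i * m i = (\<Sum>l=1..K. l * m l) + i * v"
proof -
  assume i: "i \<in> {1..K}"
  have a: "(\<Sum>l=1..K. l * (m(i:=v)) l) = i * v + (\<Sum>l\<in>{1..K}-{i}. l * (m(i:=v)) l)"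
    using i by (subst sum.remove[of _ i]) auto
  have b: "(\<Sum>l=1..K. l * m l) = i * m i + (\<Sum>l\<in>{1..K}-{i}. l * m l)"
    using i by (subst sum.remove[of _ i]) auto
  have c: "(\<Sum>l\<in>{1..K}-{i}. l * (m(i:=v)) l) = (\<Sum>l\<in>{1..K}-{i}. l * m l)"
    by (rule sum.cong) auto
  show ?thesis using a b c by simp
qed

lemma Qidx_supp: "m \<in> Qidx n \<Longrightarrow> i > n \<Longrightarrow> m i = 0"
  by (auto simp: Qidx_def)

lemma gen_aux: "(b::real) \<noteq> 0 \<Longrightarrow> (a*b) * (Z*W/(b*F)) = (a*W)*(Z/F)"
  by (cases "F = 0") (simp_all add: field_simps)

lemma step_aux: "i > (0::nat) \<Longrightarrow> real (i * (r + 1)) * ((y / real i) ^ (r+1) / fact (r+1)) = y * ((y / real i) ^ r / fact r)"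
proof -
  assume i: "i > 0"
  have f: "(fact (r+1) :: real) = real (r+1) * fact r" by simp
  have p: "(y / real i) ^ (r+1) = (y / real i) ^ r * (y / real i)" by simp
  have "real (i * (r + 1)) * ((y / real i) ^ (r+1) / fact (r+1))
       = (real i * (y / real i)) * ((y / real i) ^ r / fact r)"
    unfolding f p of_nat_mult by (rule gen_aux) simp
  also have "\<dots> = y * ((y / real i) ^ r / fact r)" using i by simp
  finally show ?thesis .
qed

lemma TT_step:
  assumes i: "i \<in> {1..K}"
  shows "real (i * (m i + 1)) * TT K (m(i := m i + 1)) y = y i * TT K m y"
proof -
  let ?F = "\<lambda>m l. (y l / real l) ^ (m l) / fact (m l)"
  have a: "TT K (m(i := m i + 1)) y = ?F (m(i := m i + 1)) i * (\<Prod>l\<in>{1..K}-{i}. ?F (m(i := m i + 1)) l)"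
    unfolding TT_def using i by (subst prod.remove[of _ i]) auto
  have b: "TT K m y = ?F m i * (\<Prod>l\<in>{1..K}-{i}. ?F m l)"
    unfolding TT_def using i by (subst prod.remove[of _ i]) auto
  have c: "(\<Prod>l\<in>{1..K}-{i}. ?F (m(i := m i + 1)) l) = (\<Prod>l\<in>{1..K}-{i}. ?F m l)"
    by (rule prod.cong) auto
  have i0: "real i \<noteq> 0" using i by auto
  have d: "real (i * (m i + 1)) * ?F (m(i := m i + 1)) i = y i * ?F m i"
    using step_aux[of i "m i" "y i"] i by simp
  have "real (i * (m i + 1)) * TT K (m(i := m i + 1)) y
     = (real (i * (m i + 1)) * ?F (m(i := m i + 1)) i) * (\<Prod>l\<in>{1..K}-{i}. ?F m l)"
    unfolding a c by (simp only: mult.assoc)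
  also have "\<dots> = y i * (?F m i * (\<Prod>l\<in>{1..K}-{i}. ?F m l))" unfolding d by (simp only: mult.assoc)
  also have "\<dots> = y i * TT K m y" unfolding b ..
  finally show ?thesis .
qed

lemma Newton_part:
  assumes i: "i \<in> {1..n}"
  shows "(\<Sum>m\<in>Qidx n. real (i * m i) * TT n m y) = y i * Q (n - i) y"
proof -
  let ?S = "{m\<in>Qidx n. m i \<ge> 1}"
  have fin: "finite (Qidx n)" by (rule Qidx_finite)
  have s1: "(\<Sum>m\<in>Qidx n. real (i * m i) * TT n m y) = (\<Sum>m\<in>?S. real (i * m i) * TT n m y)"
  proof (rule sum.mono_neutral_right)
    show "\<forall>m\<in>Qidx n - ?S. real (i * m i) * TT n m y = 0" by auto
  qed (use fin in auto)
  have s2: "(\<Sum>m\<in>?S. real (i * m i) * TT n m y)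
      = (\<Sum>m\<in>Qidx (n-i). real (i * (m i + 1)) * TT n (m(i := m i + 1)) y)"
  proof (rule sum.reindex_bij_witness[where j = "\<lambda>m. m(i := m i - 1)" and i = "\<lambda>m. m(i := m i + 1)"])
    fix m assume "m \<in> ?S" thus "m(i := m i - 1, i := (m(i := m i - 1)) i + 1) = m" by auto
  next
    fix m assume mS: "m \<in> ?S"
    hence m: "m \<in> Qidx n" and mi: "m i \<ge> 1" by auto
    have ws: "(\<Sum>l=1..n. l * m l) = n" using m by (simp add: Qidx_def)
    have supp: "\<forall>l. m l \<noteq> 0 \<longrightarrow> l \<in> {1..n}" using m by (simp add: Qidx_def)
    let ?m = "m(i := m i - 1)"
    have supp2: "\<forall>l>n-i. ?m l = 0"
    proof (intro allI impI, rule ccontr)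
      fix l assume l: "l > n - i" and nz: "?m l \<noteq> 0"
      show False
      proof (cases "l = i")
        case True
        hence "m i \<ge> 2" using nz by auto
        have "i * m i \<le> (\<Sum>l=1..n. l * m l)" by (rule member_le_sum) (use i in auto)
        hence "i * m i \<le> n" using ws by simp
        moreover have "2 * i \<le> i * m i" using \<open>m i \<ge> 2\<close> by simp
        ultimately have "i + i \<le> n" by linarith
        thus False using l True by linarith
      next
        case False
        hence ml: "m l \<noteq> 0" using nz by auto
        hence lI: "l \<in> {1..n}" using supp by auto
        have "(\<Sum>x\<in>{l,i}. x * m x) \<le> (\<Sum>l=1..n. l * m l)"
          by (rule sum_mono2) (use lI i in auto)
        hence "l * m l + i * m i \<le> n" using False ws by simp
        moreover have "l \<le> l * m l" "i \<le> i * m i" using ml mi by auto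
        ultimately have "l + i \<le> n" by linarith
        thus False using l by linarith
      qed
    qed
    have "(\<Sum>l=1..n. l * ?m l) + i * m i = n + i * (m i - 1)"
      using wupd[OF i, of m "m i - 1"] ws by simp
    moreover have "i * m i = i * (m i - 1) + i" using mi
      by (metis add.commute le_add_diff_inverse mult.right_neutral distrib_left)
    ultimately have "(\<Sum>l=1..n. l * ?m l) = n - i" by simp
    moreover have "(\<Sum>l=1..n. l * ?m l) = (\<Sum>l=1..n-i. l * ?m l)"
      by (rule wsum_extend) (use supp2 in auto)
    ultimately have "(\<Sum>l=1..n-i. l * ?m l) = n - i" by simp
    moreover have "\<forall>l. ?m l \<noteq> 0 \<longrightarrow> l \<in> {1..n-i}"
    proof (intro allI impI)
      fix l assume nz: "?m l \<noteq> 0"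
      hence "m l \<noteq> 0" by (cases "l = i") auto
      hence "l \<ge> 1" using supp by auto
      moreover have "\<not> l > n - i"
      proof
        assume "l > n - i"
        hence "?m l = 0" using supp2 by simp
        thus False using nz by simp
      qed
      ultimately show "l \<in> {1..n-i}" by simp
    qed
    ultimately show "?m \<in> Qidx (n - i)" by (simp add: Qidx_def)
  next
    fix m assume "m \<in> Qidx (n - i)" thus "m(i := m i + 1, i := (m(i := m i + 1)) i - 1) = m" by auto
  next
    fix m assume m: "m \<in> Qidx (n - i)"
    have ws: "(\<Sum>l=1..n-i. l * m l) = n - i" using m by (simp add: Qidx_def)
    have supp: "\<forall>l. m l \<noteq> 0 \<longrightarrow> l \<in> {1..n-i}" using m by (simp add: Qidx_def)
    have "(\<Sum>l=1..n. l * m l) = (\<Sum>l=1..n-i. l * m l)"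
      by (rule wsum_extend) (use supp in \<open>auto simp: not_le\<close>)
    hence "(\<Sum>l=1..n. l * m l) = n - i" using ws by simp
    moreover have "(\<Sum>l=1..n. l * (m(i := m i + 1)) l) + i * m i = (\<Sum>l=1..n. l * m l) + i * (m i + 1)"
      by (rule wupd[OF i])
    ultimately have "(\<Sum>l=1..n. l * (m(i := m i + 1)) l) = n" using i by auto
    moreover have "\<forall>l. (m(i := m i + 1)) l \<noteq> 0 \<longrightarrow> l \<in> {1..n}"
    proof (intro allI impI)
      fix l assume nz: "(m(i := m i + 1)) l \<noteq> 0"
      show "l \<in> {1..n}"
      proof (cases "l = i")
        case False
        hence "l \<in> {1..n-i}" using supp nz by auto
        thus ?thesis by auto
      qed (use i in auto)
    qed
    ultimately show "m(i := m i + 1) \<in> ?S" by (simp add: Qidx_def)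
  next
    fix m assume "m \<in> ?S"
    hence "m i \<ge> 1" by auto
    thus "real (i * ((m(i := m i - 1)) i + 1)) * TT n ((m(i := m i - 1))(i := (m(i := m i - 1)) i + 1)) y
          = real (i * m i) * TT n m y" by auto
  qed
  have s3: "\<And>m. m \<in> Qidx (n-i) \<Longrightarrow> real (i * (m i + 1)) * TT n (m(i := m i + 1)) y = y i * TT (n-i) m y"
  proof -
    fix m assume m: "m \<in> Qidx (n-i)"
    have "TT n m y = TT (n-i) m y" by (rule TT_extend) (use Qidx_supp[OF m] in auto)
    thus "real (i * (m i + 1)) * TT n (m(i := m i + 1)) y = y i * TT (n-i) m y"
      using TT_step[OF i, of m y] by simp
  qed
  show ?thesis unfolding s1 s2 using s3 by (simp add: Q_def TT_def sum_distrib_left)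
qed

lemma Newton:
  "real (Suc k) * Q (Suc k) y = (\<Sum>j\<le>k. y (Suc j) * Q (k - j) y)"
proof -
  let ?n = "Suc k"
  have "real ?n * Q ?n y = (\<Sum>m\<in>Qidx ?n. real ?n * TT ?n m y)"
    by (simp add: Q_def TT_def sum_distrib_left)
  also have "\<dots> = (\<Sum>m\<in>Qidx ?n. \<Sum>i=1..?n. real (i * m i) * TT ?n m y)"
  proof (rule sum.cong[OF refl])
    fix m assume "m \<in> Qidx ?n"
    hence "(\<Sum>i=1..?n. i * m i) = ?n" by (simp add: Qidx_def)
    hence "real ?n = (\<Sum>i=1..?n. real (i * m i))" by (metis of_nat_sum)
    thus "real ?n * TT ?n m y = (\<Sum>i=1..?n. real (i * m i) * TT ?n m y)"
      by (simp only: sum_distrib_right)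
  qed
  also have "\<dots> = (\<Sum>i=1..?n. \<Sum>m\<in>Qidx ?n. real (i * m i) * TT ?n m y)"
    by (rule sum.swap)
  also have "\<dots> = (\<Sum>i=1..?n. y i * Q (?n - i) y)"
    by (rule sum.cong[OF refl]) (rule Newton_part)
  also have "\<dots> = (\<Sum>i=Suc 0..Suc k. y i * Q (Suc k - i) y)" by simp
  also have "\<dots> = (\<Sum>j=0..k. y (Suc j) * Q (Suc k - Suc j) y)"
    by (rule sum.shift_bounds_cl_Suc_ivl)
  also have "\<dots> = (\<Sum>j\<le>k. y (Suc j) * Q (k - j) y)"
    by (simp add: atLeast0AtMost)
  finally show ?thesis .
qed



fun cc :: "nat \<Rightarrow> real \<Rightarrow> nat \<Rightarrow> real" where
  "cc k a 0 = (if k = 0 then 1 else 0)"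
| "cc 0 a (Suc n) = real (Suc n) * cc 0 a n / (a + real (Suc n))"
| "cc (Suc k) a (Suc n) = (real (Suc n) * cc (Suc k) a n + cc k a (Suc n)) / (a + real (Suc n))"

definition ccp :: "nat \<Rightarrow> real \<Rightarrow> nat \<Rightarrow> real" where
  "ccp k a n = (if k = 0 then 0 else cc (k - 1) a n)"

lemma cc_rec: "a \<ge> 0 \<Longrightarrow> (a + real (Suc n)) * cc k a (Suc n) = real (Suc n) * cc k a n + ccp k a (Suc n)"
proof -
  assume a: "a \<ge> 0"
  hence "a + real (Suc n) \<noteq> 0" by linarith
  thus ?thesis by (cases k) (simp_all add: ccp_def cc.simps)
qed

declare cc.simps(2,3)[simp del]

lemma cc_nonneg: "a \<ge> 0 \<Longrightarrow> cc k a n \<ge> 0"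
proof (induction n arbitrary: k)
  case 0 thus ?case by simp
next
  case (Suc n) thus ?case
    by (induction k) (auto intro!: divide_nonneg_pos add_nonneg_nonneg simp: cc.simps)
qed

lemma ccp_nonneg: "a \<ge> 0 \<Longrightarrow> ccp k a n \<ge> 0"
  by (simp add: ccp_def cc_nonneg)

lemma cc_mono: "0 \<le> a \<Longrightarrow> a \<le> a' \<Longrightarrow> cc k a' n \<le> cc k a n"
proof (induction n arbitrary: k)
  case 0 thus ?case by simp
next
  case (Suc n)
  note IH = Suc.IH and pr = Suc.prems
  show ?case
  proof (induction k)
    case 0
    have "real (Suc n) * cc 0 a' n / (a' + real (Suc n)) \<le> real (Suc n) * cc 0 a n / (a' + real (Suc n))"
      using IH[of 0] pr by (intro divide_right_mono mult_left_mono) auto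
    also have "\<dots> \<le> real (Suc n) * cc 0 a n / (a + real (Suc n))"
      using pr cc_nonneg[of a 0 n] by (intro divide_left_mono) auto
    finally show ?case by (simp add: cc.simps)
  next
    case (Suc k)
    have "(real (Suc n) * cc (Suc k) a' n + cc k a' (Suc n)) / (a' + real (Suc n))
        \<le> (real (Suc n) * cc (Suc k) a n + cc k a (Suc n)) / (a' + real (Suc n))"
      using IH[of "Suc k"] pr Suc.IH
      by (intro divide_right_mono add_mono mult_left_mono) auto
    also have "\<dots> \<le> (real (Suc n) * cc (Suc k) a n + cc k a (Suc n)) / (a + real (Suc n))"
      using pr cc_nonneg[of a "Suc k" n] cc_nonneg[of a k "Suc n"]
      by (intro divide_left_mono) auto
    finally show ?case by (simp add: cc.simps)
  qed
qed

fun ee :: "nat \<Rightarrow> real \<Rightarrow> nat \<Rightarrow> real" where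
  "ee 0 b n = cc 0 b n / b"
| "ee (Suc k) b n = (cc (Suc k) b n + ee k b n) / b"

definition eep :: "nat \<Rightarrow> real \<Rightarrow> nat \<Rightarrow> real" where
  "eep k b n = (if k = 0 then 0 else ee (k - 1) b n)"

fun ff :: "nat \<Rightarrow> real \<Rightarrow> nat \<Rightarrow> real" where
  "ff 0 b n = ee 0 b n / b"
| "ff (Suc k) b n = (ee (Suc k) b n + ff k b n) / b"

definition ffp :: "nat \<Rightarrow> real \<Rightarrow> nat \<Rightarrow> real" where
  "ffp k b n = (if k = 0 then 0 else ff (k - 1) b n)"

lemma ee_def': "b > 0 \<Longrightarrow> b * ee k b n = cc k b n + eep k b n"
  by (cases k) (simp_all add: eep_def)

lemma ff_def': "b > 0 \<Longrightarrow> b * ff k b n = ee k b n + ffp k b n"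
  by (cases k) (simp_all add: ffp_def)

lemma ee_nonneg: "b > 0 \<Longrightarrow> ee k b n \<ge> 0"
  using cc_nonneg[of b] by (induction k) (auto intro!: divide_nonneg_pos add_nonneg_nonneg)

declare ee.simps[simp del] ff.simps[simp del]

lemma eep_nonneg: "b > 0 \<Longrightarrow> eep k b n \<ge> 0"
  by (simp add: eep_def ee_nonneg)

lemma ff_nonneg: "b > 0 \<Longrightarrow> ff k b n \<ge> 0"
  using ee_nonneg[of b] by (induction k) (auto intro!: divide_nonneg_pos add_nonneg_nonneg simp: ff.simps)

lemma ee_ge: "b > 0 \<Longrightarrow> b * ee k b n \<ge> cc k b n"
  using ee_def'[of b k n] eep_nonneg[of b k n] by simp

lemma alg_LE: "b*e0 = c0 + ep0 \<Longrightarrow> b*e1 = c1 + ep1 \<Longrightarrow> (b+N1)*c1 = N1*c0 + cp \<Longrightarrow> N1*(ep0-ep1) = cp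
   \<Longrightarrow> b*(N1*(e0-e1)) = b*(c1::real)" by algebra
lemma alg_LF: "b*f0 = e0 + fp0 \<Longrightarrow> b*f1 = e1+fp1 \<Longrightarrow> N1*(e0-e1) = c1 \<Longrightarrow> N1*(fp0-fp1) = ep1 \<Longrightarrow> b*e1 = c1+ep1
   \<Longrightarrow> b*(N1*(f0-f1)) = b*(e1::real)" by algebra
lemma alg_ER: "b*e1 = c1+ep1 \<Longrightarrow> b*e0 = c0+ep0 \<Longrightarrow> (b+N1)*c1 = N1*c0+cp1 \<Longrightarrow> (b+N1)*ep1 = N1*ep0 + epp1
   \<Longrightarrow> b*ep1 = cp1+epp1 \<Longrightarrow> b*((b+N1)*e1) = b*(N1*e0+(ep1::real))" by algebra

lemma LE': "b > 0 \<Longrightarrow> real (Suc n) * (ee k b n - ee k b (Suc n)) = cc k b (Suc n)"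
proof (induction k)
  case 0
  have "b * (real (Suc n) * (ee 0 b n - ee 0 b (Suc n))) = b * cc 0 b (Suc n)"
    by (rule alg_LE[OF ee_def'[OF 0, of 0 n] ee_def'[OF 0, of 0 "Suc n"] cc_rec[of b n 0]])
       (use 0 in \<open>simp_all add: eep_def ccp_def\<close>)
  thus ?case using 0 by simp
next
  case (Suc k)
  have "b * (real (Suc n) * (ee (Suc k) b n - ee (Suc k) b (Suc n))) = b * cc (Suc k) b (Suc n)"
    by (rule alg_LE[OF ee_def'[OF Suc.prems, of "Suc k" n] ee_def'[OF Suc.prems, of "Suc k" "Suc n"] cc_rec[of b n "Suc k"]])
       (use Suc in \<open>simp_all add: eep_def ccp_def\<close>)
  thus ?case using Suc.prems by simp
qed

lemma LE: "b > 0 \<Longrightarrow> ee k b n - ee k b (Suc n) = cc k b (Suc n) / real (Suc n)"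
  using LE'[of b n k] by (simp add: field_simps)

lemma LF': "b > 0 \<Longrightarrow> real (Suc n) * (ff k b n - ff k b (Suc n)) = ee k b (Suc n)"
proof (induction k)
  case 0
  have "b * (real (Suc n) * (ff 0 b n - ff 0 b (Suc n))) = b * ee 0 b (Suc n)"
    by (rule alg_LF[OF ff_def'[OF 0, of 0 n] ff_def'[OF 0, of 0 "Suc n"] LE'[OF 0, of n 0] _ ee_def'[OF 0, of 0 "Suc n"]])
       (simp add: eep_def ffp_def)
  thus ?case using 0 by simp
next
  case (Suc k)
  have "b * (real (Suc n) * (ff (Suc k) b n - ff (Suc k) b (Suc n))) = b * ee (Suc k) b (Suc n)"
    by (rule alg_LF[OF ff_def'[OF Suc.prems, of "Suc k" n] ff_def'[OF Suc.prems, of "Suc k" "Suc n"] LE'[OF Suc.prems, of n "Suc k"] _ ee_def'[OF Suc.prems, of "Suc k" "Suc n"]])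
       (use Suc in \<open>simp add: eep_def ffp_def\<close>)
  thus ?case using Suc.prems by simp
qed

lemma LF: "b > 0 \<Longrightarrow> ff k b n - ff k b (Suc n) = ee k b (Suc n) / real (Suc n)"
  using LF'[of b n k] by (simp add: field_simps)

lemma ee_rec: "b > 0 \<Longrightarrow> (b + real (Suc n)) * ee k b (Suc n) = real (Suc n) * ee k b n + eep k b (Suc n)"
proof (induction k)
  case 0
  have "b * ((b + real (Suc n)) * ee 0 b (Suc n)) = b * (real (Suc n) * ee 0 b n + eep 0 b (Suc n))"
    by (rule alg_ER[OF ee_def'[OF 0, of 0 "Suc n"] ee_def'[OF 0, of 0 n] cc_rec[of b n 0]])
       (use 0 in \<open>simp_all add: eep_def ccp_def\<close>)
  thus ?case using 0 by simp
next
  case (Suc k)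
  have "b * ((b + real (Suc n)) * ee (Suc k) b (Suc n)) = b * (real (Suc n) * ee (Suc k) b n + eep (Suc k) b (Suc n))"
    by (rule alg_ER[OF ee_def'[OF Suc.prems, of "Suc k" "Suc n"] ee_def'[OF Suc.prems, of "Suc k" n] cc_rec[of b n "Suc k"]])
       (use Suc ee_def'[OF Suc.prems, of k "Suc n"] in \<open>simp_all add: eep_def ccp_def\<close>)
  thus ?case using Suc.prems by simp
qed

lemma alg_LX:
  fixes a b N N1 A c e' c' ep cpb ck ek :: real
  assumes "b = a + 1" "N1 = N + 1" "A = a + N1" "A * c = N1 * (N * e' + c') + (N1 * ep + cpb)"
    "(b + N1) * ck = N1 * c' + cpb" "(b + N1) * ek = N1 * e' + ep" "b * ek = ck + ep"
  shows "A * c = A * (N1 * ek + ck)"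
  using assms by algebra

lemma LX: "a \<ge> 0 \<Longrightarrow> cc k a n = real n * ee k (a+1) n + cc k (a+1) n"
proof (induction n arbitrary: k)
  case 0 thus ?case by simp
next
  case (Suc n)
  let ?b = "a + 1"
  note IH = Suc.IH and pr = Suc.prems
  have b: "?b > 0" using Suc.prems by simp
  show ?case
  proof (induction k)
    case 0
    have p: "ccp 0 a (Suc n) = real (Suc n) * eep 0 ?b (Suc n) + ccp 0 ?b (Suc n)"
      by (simp add: ccp_def eep_def)
    show ?case
      apply (rule alg_LX[where A = "a + real (Suc n)" and N = "real n" and b = ?b and e' = "ee 0 ?b n"
          and c' = "cc 0 ?b n" and ep = "eep 0 ?b (Suc n)" and cpb = "ccp 0 ?b (Suc n)", THEN mult_left_cancel[THEN iffD1, rotated]])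
      using cc_rec[OF pr, of n 0] IH[OF pr, of 0] p cc_rec[of ?b n 0] b ee_rec[OF b, of n 0] ee_def'[OF b, of 0 "Suc n"] pr
      by (simp_all add: algebra_simps)
  next
    case (Suc k)
    have p: "ccp (Suc k) a (Suc n) = real (Suc n) * eep (Suc k) ?b (Suc n) + ccp (Suc k) ?b (Suc n)"
      using Suc.IH by (simp add: ccp_def eep_def)
    show ?case
      apply (rule alg_LX[where A = "a + real (Suc n)" and N = "real n" and b = ?b and e' = "ee (Suc k) ?b n"
          and c' = "cc (Suc k) ?b n" and ep = "eep (Suc k) ?b (Suc n)" and cpb = "ccp (Suc k) ?b (Suc n)", THEN mult_left_cancel[THEN iffD1, rotated]])
      using cc_rec[OF pr, of n "Suc k"] IH[OF pr, of "Suc k"] p cc_rec[of ?b n "Suc k"] b ee_rec[OF b, of n "Suc k"] ee_def'[OF b, of "Suc k" "Suc n"] pr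
      by (simp_all add: algebra_simps)
  qed
qed



lemma Q_step:
  fixes y z :: "nat \<Rightarrow> real" and x :: real
  assumes yz: "\<And>j. y (Suc j) = z (Suc j) + x ^ Suc j"
  shows "Q (Suc k) y - Q (Suc k) z = x * Q k y"
proof (induction k rule: less_induct)
  case (less k)
  have D: "\<And>j. j \<le> k \<Longrightarrow> Q (k - j) y - Q (k - j) z = (if j = k then 0 else x * Q (k - j - 1) y)"
  proof -
    fix j assume j: "j \<le> k"
    show "Q (k - j) y - Q (k - j) z = (if j = k then 0 else x * Q (k - j - 1) y)"
    proof (cases "j = k")
      case True thus ?thesis by (simp add: Q0)
    next
      case False
      hence "k - j = Suc (k - j - 1)" using j by simp
      moreover have "k - j - 1 < k" using False j by simp
      ultimately show ?thesis using less.IH[of "k - j - 1"] False by simp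
    qed
  qed
  have "real (Suc k) * (Q (Suc k) y - Q (Suc k) z)
      = (\<Sum>j\<le>k. y (Suc j) * Q (k - j) y) - (\<Sum>j\<le>k. z (Suc j) * Q (k - j) z)"
    using Newton[of k y] Newton[of k z] by (simp add: algebra_simps)
  also have "\<dots> = (\<Sum>j\<le>k. z (Suc j) * (Q (k - j) y - Q (k - j) z) + x ^ Suc j * Q (k - j) y)"
    by (simp add: sum_subtractf[symmetric] yz algebra_simps)
  also have "\<dots> = (\<Sum>j\<le>k. z (Suc j) * (if j = k then 0 else x * Q (k - j - 1) y) + x ^ Suc j * Q (k - j) y)"
    by (rule sum.cong) (simp_all add: D)
  also have "\<dots> = real (Suc k) * (x * Q k y)"
  proof (cases k)
    case 0 thus ?thesis by (simp add: Q0)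
  next
    case (Suc k')
    have N: "real k * Q k y = (\<Sum>j\<le>k'. y (Suc j) * Q (k' - j) y)"
      using Newton[of k' y] Suc by simp
    have s1: "(\<Sum>j\<le>k. z (Suc j) * (if j = k then 0 else x * Q (k - j - 1) y))
        = (\<Sum>j\<le>k'. z (Suc j) * (x * Q (k' - j) y))"
      using Suc by (simp add: sum.atMost_Suc Suc_diff_le)
    have s2: "(\<Sum>j\<le>k. x ^ Suc j * Q (k - j) y) = x * Q k y + (\<Sum>j\<le>k'. x ^ Suc (Suc j) * Q (k' - j) y)"
      using Suc by (simp del: sum.atMost_Suc add: sum.atMost_Suc_shift)
    have "(\<Sum>j\<le>k. z (Suc j) * (if j = k then 0 else x * Q (k - j - 1) y) + x ^ Suc j * Q (k - j) y)
        = x * Q k y + x * (\<Sum>j\<le>k'. (z (Suc j) + x ^ Suc j) * Q (k' - j) y)"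
      unfolding sum.distrib s1 s2 by (simp add: sum_distrib_left algebra_simps sum.distrib)
    also have "\<dots> = x * Q k y + x * (real k * Q k y)" unfolding N yz ..
    finally show ?thesis by (simp add: algebra_simps)
  qed
  finally show ?case by (simp only: mult_left_cancel)
qed

lemma harm_Suc: "harm i (Suc n) = harm i n + (1 / real (Suc n)) ^ i"
  by (simp add: harm_def power_one_over)

lemma harm_0: "harm i 0 = 0" by (simp add: harm_def)

lemma Q_zero: "Q (Suc k) (\<lambda>_. 0) = 0"
  using Newton[of k "\<lambda>_. 0"] by simp

lemma cc0_Q: "cc k 0 n = Q k (\<lambda>i. harm i n)"
proof (induction n arbitrary: k)
  case 0
  show ?case by (cases k) (simp_all add: harm_0 Q0 Q_zero)
next
  case (Suc n)
  note IHo = Suc.IH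
  show ?case
  proof (induction k)
    case 0
    have "cc 0 0 (Suc n) = cc 0 0 n" using cc_rec[of 0 n 0] by (simp add: ccp_def)
    thus ?case using IHo[of 0] by (simp add: Q0)
  next
    case (Suc k)
    have r: "real (Suc n) * cc (Suc k) 0 (Suc n) = real (Suc n) * cc (Suc k) 0 n + cc k 0 (Suc n)"
      using cc_rec[of 0 n "Suc k"] by (simp add: ccp_def)
    have st: "Q (Suc k) (\<lambda>i. harm i (Suc n)) - Q (Suc k) (\<lambda>i. harm i n) = (1 / real (Suc n)) * Q k (\<lambda>i. harm i (Suc n))"
      by (rule Q_step) (simp add: harm_Suc)
    have "real (Suc n) * cc (Suc k) 0 (Suc n) = real (Suc n) * Q (Suc k) (\<lambda>i. harm i (Suc n))"
      using r st IHo[of "Suc k"] Suc.IH by (simp add: field_simps)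
    thus ?case by simp
  qed
qed



definition SS :: "nat \<Rightarrow> nat \<Rightarrow> real \<Rightarrow> real" where
  "SS k N a = (\<Sum>n<N. cc k a (Suc n) / (real (Suc n))^2)"

lemma SS_nonneg: "a \<ge> 0 \<Longrightarrow> SS k N a \<ge> 0"
  unfolding SS_def by (intro sum_nonneg divide_nonneg_pos cc_nonneg) auto

lemma tel: "a \<ge> 0 \<Longrightarrow> SS k N a - SS k N (a+1) = ff k (a+1) 0 - ff k (a+1) N"
proof (induction N)
  case 0 thus ?case by (simp add: SS_def)
next
  case (Suc N)
  have b: "a + 1 > 0" using Suc.prems by simp
  have "cc k a (Suc N) - cc k (a+1) (Suc N) = real (Suc N) * ee k (a+1) (Suc N)"
    using LX[OF Suc.prems, of k "Suc N"] by simp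
  hence "(cc k a (Suc N) - cc k (a+1) (Suc N)) / (real (Suc N))^2 = ee k (a+1) (Suc N) / real (Suc N)"
    by (simp add: power2_eq_square)
  also have "\<dots> = ff k (a+1) N - ff k (a+1) (Suc N)" using LF[OF b] by simp
  finally have st: "cc k a (Suc N) / (real (Suc N))^2 - cc k (a+1) (Suc N) / (real (Suc N))^2
       = ff k (a+1) N - ff k (a+1) (Suc N)" by (simp add: diff_divide_distrib)
  have "SS k (Suc N) a - SS k (Suc N) (a+1) = (SS k N a - SS k N (a+1))
     + (cc k a (Suc N) / (real (Suc N))^2 - cc k (a+1) (Suc N) / (real (Suc N))^2)"
    by (simp add: SS_def)
  thus ?case using Suc.IH[OF Suc.prems] st by simp
qed

lemma ee0: "b > 0 \<Longrightarrow> ee k b 0 = 1 / b^(k+1)"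
  by (induction k) (simp_all add: ee.simps field_simps)

lemma ff0: "b > 0 \<Longrightarrow> ff k b 0 = real (k+1) / b^(k+2)"
  by (induction k) (simp_all add: ff.simps ee0 field_simps)

lemma summable_inv_sq: "summable (\<lambda>n. 1 / (real (Suc n))^2)"
proof (rule summable_comparison_test')
  show "summable (\<lambda>n. 2 * (inverse (real (Suc n)) - inverse (real (Suc (Suc n)))))"
    by (intro summable_mult) (rule telescope_summable'[OF LIMSEQ_inverse_real_of_nat])
next
  fix n :: nat assume "n \<ge> 0"
  have "1 / (real (Suc n))^2 \<le> 2 / (real (Suc n) * real (Suc (Suc n)))"
    by (simp add: divide_simps power2_eq_square algebra_simps)
  also have "\<dots> = 2 * (inverse (real (Suc n)) - inverse (real (Suc (Suc n))))"
    by (simp add: field_simps)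
  finally show "norm (1 / (real (Suc n))^2) \<le> 2 * (inverse (real (Suc n)) - inverse (real (Suc (Suc n))))"
    by simp
qed

lemma summable_inv_pow: "s \<ge> 2 \<Longrightarrow> summable (\<lambda>n. 1 / (real (Suc n))^s)"
proof (rule summable_comparison_test'[OF summable_inv_sq])
  fix n :: nat assume s: "s \<ge> 2"
  have "(real (Suc n))^2 \<le> (real (Suc n))^s" by (rule power_increasing) (use s in auto)
  thus "norm (1 / (real (Suc n))^s) \<le> 1 / (real (Suc n))^2"
    by (simp add: frac_le)
qed

definition Zk :: "nat \<Rightarrow> real" where "Zk k = real (k+1) * zeta_real (k+2)"

lemma Zk_sums: "(\<lambda>m. real (k+1) / (real (Suc m))^(k+2)) sums Zk k"
proof -
  have "summable (\<lambda>n. 1 / (real (Suc n))^(k+2))" by (rule summable_inv_pow) simp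
  hence "(\<lambda>m. real (k+1) * (1 / (real (Suc m))^(k+2))) sums (real (k+1) * zeta_real (k+2))"
    unfolding zeta_real_def by (intro sums_mult summable_sums)
  thus ?thesis by (simp add: Zk_def)
qed

lemma cc_pt: "(\<lambda>M. cc k (real M) (Suc n)) \<longlonglongrightarrow> 0"
proof (rule real_tendsto_sandwich)
  let ?K = "real (Suc n) * cc k 0 n + ccp k 0 (Suc n)"
  show "\<forall>\<^sub>F M in sequentially. 0 \<le> cc k (real M) (Suc n)" by (simp add: cc_nonneg)
  show "\<forall>\<^sub>F M in sequentially. cc k (real M) (Suc n) \<le> ?K / real (Suc M)"
  proof (rule always_eventually, rule allI)
    fix M
    have r: "(real M + real (Suc n)) * cc k (real M) (Suc n) = real (Suc n) * cc k (real M) n + ccp k (real M) (Suc n)"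
      by (rule cc_rec) simp
    have "ccp k (real M) (Suc n) \<le> ccp k 0 (Suc n)" by (simp add: ccp_def cc_mono)
    moreover have "cc k (real M) n \<le> cc k 0 n" by (simp add: cc_mono)
    ultimately have "(real M + real (Suc n)) * cc k (real M) (Suc n) \<le> ?K"
      unfolding r by (intro add_mono mult_left_mono) auto
    moreover have "real (Suc M) * cc k (real M) (Suc n) \<le> (real M + real (Suc n)) * cc k (real M) (Suc n)"
      by (intro mult_right_mono cc_nonneg) auto
    ultimately have "real (Suc M) * cc k (real M) (Suc n) \<le> ?K" by linarith
    thus "cc k (real M) (Suc n) \<le> ?K / real (Suc M)" by (simp add: field_simps)
  qed
  show "(\<lambda>M. 0) \<longlonglongrightarrow> 0" by simp
  show "(\<lambda>M. ?K / real (Suc M)) \<longlonglongrightarrow> 0"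
    using LIMSEQ_Suc[OF lim_const_over_n[of ?K]] by simp
qed

lemma SS_pt: "(\<lambda>M. SS k N (real M)) \<longlonglongrightarrow> 0"
proof -
  have "(\<lambda>M. \<Sum>n<N. cc k (real M) (Suc n) / (real (Suc n))^2) \<longlonglongrightarrow> (\<Sum>n<N. 0 / (real (Suc n))^2)"
    by (intro tendsto_sum tendsto_divide cc_pt tendsto_const) auto
  thus ?thesis by (simp add: SS_def)
qed

lemma SS_decomp: "SS k N 0 = (\<Sum>m<M. ff k (real (Suc m)) 0 - ff k (real (Suc m)) N) + SS k N (real M)"
proof -
  have "SS k N 0 - SS k N (real M) = (\<Sum>m<M. SS k N (real m) - SS k N (real (Suc m)))"
    by (subst sum_lessThan_telescope') simp
  also have "\<dots> = (\<Sum>m<M. ff k (real (Suc m)) 0 - ff k (real (Suc m)) N)"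
  proof (rule sum.cong[OF refl])
    fix m assume "m \<in> {..<M}"
    have "SS k N (real m) - SS k N (real m + 1) = ff k (real m + 1) 0 - ff k (real m + 1) N"
      by (rule tel) simp
    thus "SS k N (real m) - SS k N (real (Suc m)) = ff k (real (Suc m)) 0 - ff k (real (Suc m)) N"
      by (simp add: add.commute)
  qed
  finally show ?thesis by simp
qed

lemma SS_upper: "SS k N 0 \<le> Zk k"
proof -
 have "SS k N 0 \<le> Zk k + 0"
 proof (rule LIMSEQ_le_const[OF tendsto_add[OF tendsto_const SS_pt]])
  show "\<exists>M0. \<forall>M\<ge>M0. SS k N 0 \<le> Zk k + SS k N (real M)"
  proof (intro exI allI impI)
    fix M :: nat
    have "(\<Sum>m<M. ff k (real (Suc m)) 0 - ff k (real (Suc m)) N) \<le> (\<Sum>m<M. real (k+1) / (real (Suc m))^(k+2))"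
      by (intro sum_mono) (simp add: ff0 ff_nonneg)
    also have "\<dots> \<le> Zk k"
    proof -
      have su: "summable (\<lambda>m. real (k+1) / (real (Suc m))^(k+2))" and eq: "Zk k = (\<Sum>m. real (k+1) / (real (Suc m))^(k+2))"
        using Zk_sums[of k] by (auto simp: sums_iff)
      show ?thesis unfolding eq by (rule sum_le_suminf[OF su]) auto
    qed
    finally show "SS k N 0 \<le> Zk k + SS k N (real M)" using SS_decomp[of k N M] by linarith
  qed
 qed
 thus ?thesis by simp
qed

lemma gsum: "summable (\<lambda>n. cc k 0 (Suc n) / (real (Suc n))^2)"
  by (rule summableI_nonneg_bounded[where x = "Zk k"])
     (use SS_upper[of k] in \<open>auto simp: SS_def cc_nonneg\<close>)



lemma cc0_Suc_ge: "cc j 0 n \<le> cc j 0 (Suc n)"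
proof -
  have "real (Suc n) * cc j 0 (Suc n) = real (Suc n) * cc j 0 n + ccp j 0 (Suc n)"
    using cc_rec[of 0 n j] by simp
  moreover have "ccp j 0 (Suc n) \<ge> 0" by (rule ccp_nonneg) simp
  ultimately have "real (Suc n) * cc j 0 n \<le> real (Suc n) * cc j 0 (Suc n)" by linarith
  thus ?thesis by simp
qed

lemma cc0_mono: "m \<le> n \<Longrightarrow> cc j 0 m \<le> cc j 0 n"
  by (rule lift_Suc_mono_le[of "\<lambda>n. cc j 0 n"]) (auto intro: cc0_Suc_ge)

lemma ccN: "(\<lambda>N. cc j 0 N / real N) \<longlonglongrightarrow> 0"
proof -
  define g where "g n = cc j 0 (Suc n) / (real (Suc n))^2" for n
  define S where "S N = (\<Sum>n<N. g n)" for N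
  have sg: "summable g" unfolding g_def by (rule gsum)
  have L: "S \<longlonglongrightarrow> suminf g" unfolding S_def by (rule summable_LIMSEQ[OF sg])
  have L2: "(\<lambda>N. S (2 * N)) \<longlonglongrightarrow> suminf g"
    using LIMSEQ_subseq_LIMSEQ[OF L, of "\<lambda>N. 2 * N"] by (simp add: strict_mono_def o_def)
  have T: "(\<lambda>N. 4 * (S (2 * N) - S N)) \<longlonglongrightarrow> 4 * (suminf g - suminf g)"
    by (intro tendsto_intros L L2)
  show ?thesis
  proof (rule real_tendsto_sandwich[OF _ _ tendsto_const])
    show "\<forall>\<^sub>F N in sequentially. 0 \<le> cc j 0 N / real N" by (simp add: cc_nonneg)
    show "(\<lambda>N. 4 * (S (2 * N) - S N)) \<longlonglongrightarrow> 0" using T by simp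
    show "\<forall>\<^sub>F N in sequentially. cc j 0 N / real N \<le> 4 * (S (2 * N) - S N)"
    proof (rule eventually_sequentiallyI[of 1])
      fix N :: nat assume N: "N \<ge> 1"
      have split: "S (2 * N) = S N + (\<Sum>n\<in>{N..<2*N}. g n)"
        unfolding S_def lessThan_atLeast0 by (subst sum.atLeastLessThan_concat[symmetric, of 0 N "2*N"]) auto
      have lb: "\<And>n. n \<in> {N..<2*N} \<Longrightarrow> cc j 0 N / (4 * (real N)^2) \<le> g n"
      proof -
        fix n assume n: "n \<in> {N..<2*N}"
        have "cc j 0 N \<le> cc j 0 (Suc n)" using n by (intro cc0_mono) auto
        moreover have "(real (Suc n))^2 \<le> 4 * (real N)^2"
        proof -
          have "real (Suc n) \<le> 2 * real N" using n by auto
          hence "(real (Suc n))^2 \<le> (2 * real N)^2" by (intro power_mono) auto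
          thus ?thesis by (simp add: power_mult_distrib)
        qed
        ultimately show "cc j 0 N / (4 * (real N)^2) \<le> g n" unfolding g_def
          by (intro frac_le cc_nonneg) auto
      qed
      have "real (card {N..<2*N}) * (cc j 0 N / (4 * (real N)^2)) \<le> (\<Sum>n\<in>{N..<2*N}. g n)"
        by (rule sum_bounded_below) (rule lb)
      moreover have "card {N..<2*N} = N" by simp
      ultimately have "real N * (cc j 0 N / (4 * (real N)^2)) \<le> S (2 * N) - S N" using split by simp
      moreover have "real N * (cc j 0 N / (4 * (real N)^2)) = (cc j 0 N / real N) / 4"
        using N by (simp add: power2_eq_square field_simps)
      ultimately have h: "cc j 0 N / real N / 4 \<le> S (2 * N) - S N" by simp
      have "cc j 0 N / real N \<le> (S (2 * N) - S N) * 4"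
        using h pos_divide_le_eq[of 4 "cc j 0 N / real N" "S (2 * N) - S N"] by simp
      thus "cc j 0 N / real N \<le> 4 * (S (2 * N) - S N)" by (simp add: mult.commute)
    qed
  qed
qed

lemma cc_lim_b: "b \<ge> 1 \<Longrightarrow> (\<lambda>N. cc j b N) \<longlonglongrightarrow> 0"
proof (rule real_tendsto_sandwich[OF _ _ tendsto_const ccN[of j]])
  assume b: "b \<ge> 1"
  show "\<forall>\<^sub>F N in sequentially. 0 \<le> cc j b N" using b by (simp add: cc_nonneg)
  show "\<forall>\<^sub>F N in sequentially. cc j b N \<le> cc j 0 N / real N"
  proof (rule eventually_sequentiallyI[of 1])
    fix N :: nat assume N: "N \<ge> 1"
    have "cc j b N \<le> cc j 1 N" using b by (intro cc_mono) auto
    moreover have "cc j 0 N = real N * ee j 1 N + cc j 1 N" using LX[of 0 j N] by simp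
    moreover have "cc j 1 N \<le> ee j 1 N" using ee_ge[of 1 j N] by simp
    moreover have "cc j 1 N \<ge> 0" by (simp add: cc_nonneg)
    ultimately have "real N * cc j b N \<le> cc j 0 N"
      by (smt (verit) mult_left_mono of_nat_0_le_iff)
    thus "cc j b N \<le> cc j 0 N / real N" using N by (simp add: field_simps)
  qed
qed

lemma ee_lim: "b \<ge> 1 \<Longrightarrow> (\<lambda>N. ee j b N) \<longlonglongrightarrow> 0"
proof (induction j)
  case 0 thus ?case using tendsto_divide[OF cc_lim_b[OF 0, of 0] tendsto_const[of b]] by (simp add: ee.simps)
next
  case (Suc j) thus ?case
    using tendsto_divide[OF tendsto_add[OF cc_lim_b[OF Suc.prems, of "Suc j"] Suc.IH[OF Suc.prems]] tendsto_const[of b]]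
    by (simp add: ee.simps)
qed

lemma ff_lim: "b \<ge> 1 \<Longrightarrow> (\<lambda>N. ff j b N) \<longlonglongrightarrow> 0"
proof (induction j)
  case 0 thus ?case using tendsto_divide[OF ee_lim[OF 0, of 0] tendsto_const[of b]] by (simp add: ff.simps)
next
  case (Suc j) thus ?case
    using tendsto_divide[OF tendsto_add[OF ee_lim[OF Suc.prems, of "Suc j"] Suc.IH[OF Suc.prems]] tendsto_const[of b]]
    by (simp add: ff.simps)
qed

lemma A_value: "(\<Sum>n. cc k 0 (Suc n) / (real (Suc n))^2) = Zk k"
proof (rule antisym)
  have sg: "summable (\<lambda>n. cc k 0 (Suc n) / (real (Suc n))^2)" by (rule gsum)
  show "(\<Sum>n. cc k 0 (Suc n) / (real (Suc n))^2) \<le> Zk k"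
    by (rule suminf_le_const[OF sg]) (use SS_upper[of k] in \<open>simp add: SS_def\<close>)
  have low: "(\<Sum>m<M. real (k+1) / (real (Suc m))^(k+2)) \<le> (\<Sum>n. cc k 0 (Suc n) / (real (Suc n))^2)" for M
  proof -
    have l1: "(\<lambda>N. SS k N 0) \<longlonglongrightarrow> (\<Sum>n. cc k 0 (Suc n) / (real (Suc n))^2)"
      unfolding SS_def by (rule summable_LIMSEQ[OF sg])
    have l2: "(\<lambda>N. \<Sum>m<M. ff k (real (Suc m)) 0 - ff k (real (Suc m)) N) \<longlonglongrightarrow> (\<Sum>m<M. ff k (real (Suc m)) 0 - 0)"
      by (intro tendsto_sum tendsto_diff tendsto_const ff_lim) simp
    have "(\<Sum>m<M. ff k (real (Suc m)) 0 - 0) \<le> (\<Sum>n. cc k 0 (Suc n) / (real (Suc n))^2)"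
    proof (rule LIMSEQ_le[OF l2 l1], intro exI allI impI)
      fix N :: nat
      show "(\<Sum>m<M. ff k (real (Suc m)) 0 - ff k (real (Suc m)) N) \<le> SS k N 0"
        using SS_decomp[of k N M] SS_nonneg[of "real M" k N] by simp
    qed
    thus ?thesis by (simp add: ff0)
  qed
  show "Zk k \<le> (\<Sum>n. cc k 0 (Suc n) / (real (Suc n))^2)"
    using Zk_sums[of k] unfolding sums_def by (rule LIMSEQ_le_const2) (use low in auto)
qed



lemma cc01: "cc j 0 (Suc 0) = 1"
  by (induction j) (simp_all add: cc.simps)

lemma aux3: "(N::real) > 0 \<Longrightarrow> N*C2 = N*C1 + D \<Longrightarrow> C1/N^2 = C2/N^2 - D/N^3"
proof -
  assume N: "N > 0" and h: "N*C2 = N*C1 + D"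
  have "C2 = C1 + D/N" using N h by (simp add: field_simps)
  hence "C2/N^2 = C1/N^2 + D/N^3" using N by (simp add: field_simps power2_eq_square power3_eq_cube)
  thus ?thesis by simp
qed

theorem mainTheorem17:
  fixes k :: nat
  assumes "k \<ge> 1"
  shows "summable (\<lambda>n. Q (k+1) (\<lambda>i. harm i (Suc n)) / (real (Suc n) + 1) ^ 2)
       \<and> summable (\<lambda>n. Q k (\<lambda>i. harm i (Suc n)) / (real (Suc n)) ^ 3)
       \<and> (\<Sum>n. Q (k+1) (\<lambda>i. harm i (Suc n)) / (real (Suc n) + 1) ^ 2)
         + (\<Sum>n. Q k (\<lambda>i. harm i (Suc n)) / (real (Suc n)) ^ 3)
         = real (k + 2) * zeta_real (k + 3)"
proof -
  define g where "g n = cc (k+1) 0 (Suc n) / (real (Suc n))^2" for n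
  define u where "u n = cc k 0 (Suc n) / (real (Suc n))^3" for n
  have sg: "summable g" unfolding g_def by (rule gsum)
  have sg': "summable (\<lambda>n. cc k 0 (Suc n) / (real (Suc n))^2)" by (rule gsum)
  have su: "summable u"
  proof (rule summable_comparison_test'[OF sg'])
    fix n :: nat
    have "(real (Suc n))^2 \<le> (real (Suc n))^3" by (rule power_increasing) auto
    hence "cc k 0 (Suc n) / (real (Suc n))^3 \<le> cc k 0 (Suc n) / (real (Suc n))^2"
      by (intro divide_left_mono cc_nonneg) auto
    thus "norm (u n) \<le> cc k 0 (Suc n) / (real (Suc n))^2"
      unfolding u_def using cc_nonneg[of 0 k "Suc n"] by simp
  qed
  have tq: "\<And>n. Q (k+1) (\<lambda>i. harm i (Suc n)) / (real (Suc n) + 1) ^ 2 = g (Suc n) - u (Suc n)"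
  proof -
    fix n
    have r: "real (Suc (Suc n)) * cc (k+1) 0 (Suc (Suc n)) = real (Suc (Suc n)) * cc (k+1) 0 (Suc n) + cc k 0 (Suc (Suc n))"
      using cc_rec[of 0 "Suc n" "k+1"] by (simp add: ccp_def)
    have e: "real (Suc n) + 1 = real (Suc (Suc n))" by simp
    show "Q (k+1) (\<lambda>i. harm i (Suc n)) / (real (Suc n) + 1) ^ 2 = g (Suc n) - u (Suc n)"
      unfolding cc0_Q[symmetric] e g_def u_def by (rule aux3[OF _ r]) simp
  qed
  have uq: "\<And>n. Q k (\<lambda>i. harm i (Suc n)) / (real (Suc n)) ^ 3 = u n"
    unfolding u_def cc0_Q ..
  have sgS: "summable (\<lambda>n. g (Suc n))" using sg by (simp add: summable_Suc_iff)
  have suS: "summable (\<lambda>n. u (Suc n))" using su by (simp add: summable_Suc_iff)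
  have s1: "summable (\<lambda>n. g (Suc n) - u (Suc n))" by (rule summable_diff[OF sgS suS])
  have v1: "(\<Sum>n. g (Suc n) - u (Suc n)) = (suminf g - g 0) - (suminf u - u 0)"
    using suminf_diff[OF sgS suS] suminf_split_head[OF sg] suminf_split_head[OF su] by simp
  have g0: "g 0 = 1" and u0: "u 0 = 1" by (simp_all add: g_def u_def cc01)
  have gv: "suminf g = real (k+2) * zeta_real (k+3)"
  proof -
    have "k + 1 + 2 = k + 3" by simp
    thus ?thesis unfolding g_def A_value Zk_def by (simp add: numeral_3_eq_3)
  qed
  show ?thesis
    unfolding tq uq using s1 su v1 g0 u0 gv by simp
qed


end
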